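(* The language $L_3=\{\omega\in\{a,b,c\}^*:\ |\omega|_a=|\omega|_b=|\omega|_c\}$ is recognized by some QPA with probability $\frac23$: there is a QPA which accepts every $x\in L_3$ with probability at least $\frac23$ and rejects every $x\in\{a,b,c\}^*\setminus L_3$ with probability at least $\frac23$.
   Context: $|\omega|_i$ denotes the number of occurrences of the symbol $i$ in $\omega$. A QPA is a tuple $A=(Q,\Sigma,T,q_0,Q_a,Q_r,\delta)$ with $Q$ a finite set of states, $\Sigma$ a finite input alphabet, $T$ a finite stack alphabet, $q_0\in Q$, $Q_a,Q_r\subset Q$ disjoint, $\Gamma=\Sigma\cup\{\#,\$\}$ (end-markers), $\Delta=T\cup\{Z_0\}$ ($Z_0\notin T$ the stack base symbol), and $\delta:Q\times\Gamma\times\Delta\times Q\times\{\downarrow,\to\}\times\Delta^*\to\mathbb{C}$ such that whenever $\delta(q,\alpha,\beta,q',d,\omega)\ne0$: $|\omega|\le2$; if $|\omega|=2$ then $\omega_1=\beta$; if $\beta=Z_0$ then $\omega\in Z_0T^*$; if $\beta\ne Z_0$ then $\omega\in T^*$; and such that the evolution operator $U_A$ is unitary. A configuration is $|\nu_i q_j\nu_k,\omega_l\rangle$ with $q_j\in Q$, $\nu_i\nu_k\in\#\Sigma^*\$$, input head on the first symbol of $\nu_k$, $\omega_l\in Z_0T^*$ the stack with head on its last symbol; $C$ is the set of configurations, $H_A=\ell_2(C)$; for $c=|\nu_i q_j\sigma\nu_k,\omega_l\tau\rangle$, $U_A|c\rangle=\sum_{(q,d,\omega)}\delta(q_j,\sigma,\tau,q,d,\omega)|f(c,d,q),\omega_l\omega\rangle$,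 where $f(c,\downarrow,q)=\nu_i q\sigma\nu_k$, $f(c,\to,q)=\nu_i\sigma q\nu_k$. Recognition: $E_a,E_r,E_n$ are the subspaces spanned by configurations with state in $Q_a$, in $Q_r$, in neither; on input $x$ start in $|q_0\#x\$,Z_0\rangle$, repeatedly apply $U_A$ and measure w.r.t. $E_a\oplus E_r\oplus E_n$, halting on ``accept''/``reject'' and otherwise continuing from the normalized projection onto $E_n$; acceptance/rejection probability is the total probability of eventually halting with that outcome. *)

theory Defs
  imports "HOL-Analysis.Analysis"
begin

text \<open>Tape symbols Gamma = Sigma + end-markers: LM is the left end-marker (#), RM the right one ($).\<close>
datatype 's tsym = LM | RM | Sym 's

datatype stsym = Z0 | S nat

datatype dir = Stay | Right

text \<open>A QPA over input alphabet 's (Sigma = UNIV :: 's set). States and stack alphabet are finite sets of nats.\<close>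
record 's qpa =
  states :: "nat set"
  stk    :: "nat set"
  init   :: nat
  acc    :: "nat set"
  rej    :: "nat set"
  delta  :: "nat \<Rightarrow> 's tsym \<Rightarrow> stsym \<Rightarrow> nat \<Rightarrow> dir \<Rightarrow> stsym list \<Rightarrow> complex"

definition Delta_set :: "'s qpa \<Rightarrow> stsym set" where
  "Delta_set A = insert Z0 (S ` stk A)"

text \<open>Configurations |nu_i q nu_k, omega>: input word x (tape is # x $), head position p
  (0 = on #, length x + 1 = on $), state q, stack as a list (Z0 first, top = last element).\<close>
type_synonym 's cfg = "'s list \<times> nat \<times> nat \<times> stsym list"

definition tape :: "'s list \<Rightarrow> nat \<Rightarrow> 's tsym" where
  "tape x p = (if p = 0 then LM else if p \<le> length x then Sym (x ! (p - 1)) else RM)"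

definition cstate :: "'s cfg \<Rightarrow> nat" where
  "cstate c = fst (snd (snd c))"

definition configs :: "'s qpa \<Rightarrow> 's cfg set" where
  "configs A = {(x, p, q, s). p \<le> length x + 1 \<and> q \<in> states A \<and> s \<noteq> [] \<and> hd s = Z0
                 \<and> set (tl s) \<subseteq> S ` stk A}"

text \<open>Matrix entry <c'| U_A |c>.\<close>
fun amp :: "'s qpa \<Rightarrow> 's cfg \<Rightarrow> 's cfg \<Rightarrow> complex" where
  "amp A (x', p', q', s') (x, p, q, s) =
     (if x' = x \<and> s \<noteq> [] \<and> (p' = p \<or> p' = Suc p) \<and> length s \<le> length s' + 1
         \<and> take (length s - 1) s' = butlast s
      then delta A q (tape x p) (last s) q' (if p' = p then Stay else Right) (drop (length s - 1) s')
      else 0)"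

definition unitary_mat :: "'c set \<Rightarrow> ('c \<Rightarrow> 'c \<Rightarrow> complex) \<Rightarrow> bool" where
  "unitary_mat C M \<longleftrightarrow>
     (\<forall>c\<in>C. \<forall>d\<in>C. (\<Sum>\<^sub>\<infinity>e\<in>C. cnj (M e c) * M e d) = (if c = d then 1 else 0)) \<and>
     (\<forall>c\<in>C. \<forall>d\<in>C. (\<Sum>\<^sub>\<infinity>e\<in>C. M c e * cnj (M d e)) = (if c = d then 1 else 0))"

definition is_QPA :: "'s qpa \<Rightarrow> bool" where
  "is_QPA A \<longleftrightarrow>
     finite (states A) \<and> finite (stk A) \<and> init A \<in> states A \<and>
     acc A \<subseteq> states A \<and> rej A \<subseteq> states A \<and> acc A \<inter> rej A = {} \<and>
     (\<forall>q \<alpha> \<beta> q' d \<omega>. delta A q \<alpha> \<beta> q' d \<omega> \<noteq> 0 \<longrightarrow>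
        q \<in> states A \<and> q' \<in> states A \<and> \<beta> \<in> Delta_set A \<and> set \<omega> \<subseteq> Delta_set A \<and>
        length \<omega> \<le> 2 \<and>
        (length \<omega> = 2 \<longrightarrow> \<omega> ! 0 = \<beta>) \<and>
        (\<beta> = Z0 \<longrightarrow> \<omega> \<noteq> [] \<and> hd \<omega> = Z0 \<and> set (tl \<omega>) \<subseteq> S ` stk A) \<and>
        (\<beta> \<noteq> Z0 \<longrightarrow> set \<omega> \<subseteq> S ` stk A) \<and>
        (\<alpha> = RM \<longrightarrow> d = Stay)) \<and>
     unitary_mat (configs A) (amp A)"

definition Uapp :: "'s qpa \<Rightarrow> ('s cfg \<Rightarrow> complex) \<Rightarrow> ('s cfg \<Rightarrow> complex)" where
  "Uapp A \<psi> = (\<lambda>c'. \<Sum>\<^sub>\<infinity>c. amp A c' c * \<psi> c)"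

text \<open>Unnormalized non-halting part of the state after n steps on input x.\<close>
fun psi :: "'s qpa \<Rightarrow> 's list \<Rightarrow> nat \<Rightarrow> ('s cfg \<Rightarrow> complex)" where
  "psi A x 0 = (\<lambda>c. if c = (x, 0, init A, [Z0]) then 1 else 0)"
| "psi A x (Suc n) = (\<lambda>c. if cstate c \<notin> acc A \<union> rej A then Uapp A (psi A x n) c else 0)"

definition acc_prob :: "'s qpa \<Rightarrow> 's list \<Rightarrow> real" where
  "acc_prob A x = (\<Sum>n. \<Sum>\<^sub>\<infinity>c\<in>{c. cstate c \<in> acc A}. (cmod (Uapp A (psi A x n) c))\<^sup>2)"

definition rej_prob :: "'s qpa \<Rightarrow> 's list \<Rightarrow> real" where
  "rej_prob A x = (\<Sum>n. \<Sum>\<^sub>\<infinity>c\<in>{c. cstate c \<in> rej A}. (cmod (Uapp A (psi A x n) c))\<^sup>2)"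

datatype letter = La | Lb | Lc

definition L3 :: "letter list set" where
  "L3 = {w. count_list w La = count_list w Lb \<and> count_list w Lb = count_list w Lc}"

end

theory Submission
  imports Defs
begin


definition cop :: "nat \<Rightarrow> letter \<Rightarrow> int" where
  "cop i \<sigma> = (case \<sigma> of La \<Rightarrow> (if i = 1 then 0 else 1)
     | Lb \<Rightarrow> (if i = 0 then -1 else if i = 1 then 1 else 0)
     | Lc \<Rightarrow> (if i = 0 then 0 else -1))"

definition cstep :: "nat \<Rightarrow> letter \<Rightarrow> stsym \<Rightarrow> nat \<times> dir \<times> stsym list" where
  "cstep q \<sigma> b = (let k = cop ((q - 3) mod 3) \<sigma> in
     if k = 0 then (q, Right, [b])
     else if k = 1 then (if q < 6 then (q, Right, [b, S 0]) else if b = S 0 then (q, Right, []) else (q - 3, Right, [b]))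
     else (if 6 \<le> q then (q, Right, [b, S 0]) else if b = S 0 then (q, Right, []) else (q + 3, Right, [b])))"

fun stepf :: "nat \<Rightarrow> letter tsym \<Rightarrow> stsym \<Rightarrow> nat \<times> dir \<times> stsym list" where
  "stepf q LM b = (if q < 3 then (if b = Z0 then (q+3, Right, [Z0]) else (q, Stay, [b]))
    else if q < 6 then (if b = Z0 then (q-3, Stay, [Z0]) else (q, Right, [b]))
    else if q < 9 then (q, Right, [b])
    else (if b = Z0 then (q, Right, [Z0]) else if b = S 0 then (q-6, Stay, []) else (q, Stay, [])))"
| "stepf q RM b = (if q < 3 then (q, Stay, [b])
    else if q < 6 then (if b = Z0 then (q+6, Stay, [Z0, S 0]) else (q+9, Stay, [b, S 0]))
    else if q < 9 then (q+6, Stay, [b, S 1])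
    else if q < 12 then (if b = Z0 then (q+3, Stay, [Z0, S 0]) else (q, Stay, [b, S 0]))
    else (q-3, Stay, [b, S 1]))"
| "stepf q (Sym \<sigma>) b = (if q < 3 then (q, Stay, [b])
    else if q < 9 then cstep q \<sigma> b
    else (if b = Z0 then (q, Right, [Z0]) else (q, Stay, [b])))"

definition stepc :: "letter tsym \<Rightarrow> nat \<Rightarrow> stsym list \<Rightarrow> dir \<times> nat \<times> stsym list" where
  "stepc \<alpha> q s = (case stepf q \<alpha> (last s) of (q', d, \<omega>) \<Rightarrow> (d, q', butlast s @ \<omega>))"

definition valid :: "nat \<Rightarrow> stsym list \<Rightarrow> bool" where
  "valid q s \<longleftrightarrow> q < 15 \<and> s \<noteq> [] \<and> hd s = Z0 \<and> set (tl s) \<subseteq> {S 0, S 1}"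

definition inF :: "nat \<Rightarrow> stsym list \<Rightarrow> bool" where
  "inF q s \<longleftrightarrow> (3 \<le> q \<and> q < 9) \<or> (9 \<le> q \<and> s = [Z0])"

definition invLM :: "nat \<Rightarrow> stsym list \<Rightarrow> nat \<times> stsym list" where
  "invLM q s = (if q < 3 then (if s = [Z0] then (q+3, [Z0]) else (q, s))
     else if q < 9 then (q+6, s @ [S 0]) else (q, s @ [S 1]))"

definition invR :: "letter tsym \<Rightarrow> nat \<Rightarrow> stsym list \<Rightarrow> nat \<times> stsym list" where
  "invR \<alpha> q s = (case \<alpha> of
      LM \<Rightarrow> (if 3 \<le> q \<and> q < 6 \<and> s = [Z0] then (q-3, [Z0]) else (q, s))
    | RM \<Rightarrow> (q, s)
    | Sym \<sigma> \<Rightarrow> (if q < 9 then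
          (let k = cop ((q - 3) mod 3) \<sigma> in
           if k = 0 then (q, s)
           else if k = 1 then (if q < 6 then (if last s = S 0 then (q, butlast s) else (q+3, s)) else (q, s @ [S 0]))
           else (if 6 \<le> q then (if last s = S 0 then (q, butlast s) else (q-3, s)) else (q, s @ [S 0])))
         else (q, s)))"

definition invS :: "letter tsym \<Rightarrow> nat \<Rightarrow> stsym list \<Rightarrow> nat \<times> stsym list" where
  "invS \<alpha> q s = (case \<alpha> of
      RM \<Rightarrow> (if q < 9 then (q, s)
             else if q < 12 then (if last s = S 1 then (q+3, butlast s)
                   else if butlast s = [Z0] then (q-6, [Z0]) else (q, butlast s))
             else (if last s = S 1 then (q-6, butlast s)
                   else if butlast s = [Z0] then (q-3, [Z0]) else (q-9, butlast s)))
    | _ \<Rightarrow> (q, s))"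

lemma bl2[simp]: "butlast (v @ [a, b]) = v @ [a]"
  by (induct v) auto

lemma valid_cases:
  assumes "valid q s"
  shows "s = [Z0] \<or> (\<exists>v. s = v @ [S 0] \<and> valid q v) \<or> (\<exists>v. s = v @ [S 1] \<and> valid q v)"
proof (cases "tl s" rule: rev_exhaust)
  case Nil
  then show ?thesis using assms unfolding valid_def by (cases s) auto
next
  case (snoc ys y)
  then have s: "s = Z0 # ys @ [y]" using assms unfolding valid_def by (cases s) auto
  have "y = S 0 \<or> y = S 1" using assms s unfolding valid_def by auto
  moreover have "valid q (Z0 # ys)" using assms s unfolding valid_def by auto
  ultimately show ?thesis using s by auto
qed

lemma q15: "(q::nat) < 15 \<Longrightarrow> q = 0 \<or> q = 1 \<or> q = 2 \<or> q = 3 \<or> q = 4 \<or> q = 5 \<or> q = 6 \<or> q = 7 \<or> q = 8 \<or> q = 9 \<or> q = 10 \<or> q = 11 \<or> q = 12 \<or> q = 13 \<or> q = 14"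
  by (simp add: less_Suc_eq numeral_eq_Suc)

lemma tsym_cases: "\<alpha> = LM \<or> \<alpha> = RM \<or> \<alpha> = Sym La \<or> \<alpha> = Sym Lb \<or> \<alpha> = Sym Lc"
  by (metis letter.exhaust tsym.exhaust)

lemma valid_snoc: "valid q v \<Longrightarrow> (t = S 0 \<or> t = S 1) \<Longrightarrow> valid q' (v @ [t]) \<longleftrightarrow> q' < 15"
  unfolding valid_def by (cases v) auto

lemma stepc_valid0:
  assumes "valid q s"
  shows "valid (fst (snd (stepc \<alpha> q s))) (snd (snd (stepc \<alpha> q s))) \<and> (\<alpha> = RM \<longrightarrow> fst (stepc \<alpha> q s) = Stay)"
proof -
  have q: "q < 15" using assms(1) valid_def by auto
  show ?thesis
  using valid_cases[OF assms(1)] q15[OF q] tsym_cases[of \<alpha>]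
  apply (elim disjE exE conjE)
  apply (simp_all add: stepc_def cstep_def cop_def valid_snoc)
  apply (simp_all add: valid_def)
  done
qed

lemma valid_cases2:
  assumes "valid q s"
  shows "s = [Z0] \<or> s = [Z0, S 0] \<or> s = [Z0, S 1] \<or>
    (\<exists>w. valid q w \<and> (s = w @ [S 0, S 0] \<or> s = w @ [S 0, S 1] \<or> s = w @ [S 1, S 0] \<or> s = w @ [S 1, S 1]))"
proof -
  have A: "s = [Z0] \<or> (\<exists>v. s = v @ [S 0] \<and> valid q v) \<or> (\<exists>v. s = v @ [S 1] \<and> valid q v)"
    using valid_cases[OF assms] .
  show ?thesis
  proof (rule disjE[OF A])
    assume "s = [Z0]" then show ?thesis by simp
  next
    assume "(\<exists>v. s = v @ [S 0] \<and> valid q v) \<or> (\<exists>v. s = v @ [S 1] \<and> valid q v)"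
    then obtain v t where v: "s = v @ [t]" "valid q v" "t = S 0 \<or> t = S 1" by blast
    from valid_cases[OF v(2)] show ?thesis
    proof (elim disjE exE conjE)
      assume "v = [Z0]" then show ?thesis using v by auto
    next
      fix w assume "v = w @ [S 0]" "valid q w" then show ?thesis using v by auto
    next
      fix w assume "v = w @ [S 1]" "valid q w" then show ?thesis using v by auto
    qed
  qed
qed

lemma valid_app: "valid q w \<Longrightarrow> set t \<subseteq> {S 0, S 1} \<Longrightarrow> valid q' (w @ t) \<longleftrightarrow> q' < 15"
  unfolding valid_def by (cases w) auto

lemma inv_b:
  assumes "valid q s" "fst (stepc LM q s) = Stay"
  shows "invLM (fst (snd (stepc LM q s))) (snd (snd (stepc LM q s))) = (q, s)"
proof -
  have q: "q < 15" using assms(1) valid_def by auto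
  show ?thesis
  using valid_cases[OF assms(1)] q15[OF q] assms(2)
  apply (elim disjE exE conjE)
  apply (simp_all add: stepc_def invLM_def)
  done
qed

lemma inv_c:
  assumes "valid q s" "\<alpha> \<noteq> RM" "fst (stepc \<alpha> q s) = Right"
  shows "inF (fst (snd (stepc \<alpha> q s))) (snd (snd (stepc \<alpha> q s))) \<and> invR \<alpha> (fst (snd (stepc \<alpha> q s))) (snd (snd (stepc \<alpha> q s))) = (q, s)"
proof -
  have q: "q < 15" using assms(1) valid_def by auto
  show ?thesis
  using valid_cases[OF assms(1)] q15[OF q] tsym_cases[of \<alpha>] assms(2,3)
  apply (elim disjE exE conjE)
  apply (simp_all add: stepc_def cstep_def cop_def invR_def inF_def)
  done
qed

lemma inv_d:
  assumes "valid q s" "\<alpha> \<noteq> LM" "fst (stepc \<alpha> q s) = Stay"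
  shows "\<not> inF (fst (snd (stepc \<alpha> q s))) (snd (snd (stepc \<alpha> q s))) \<and> invS \<alpha> (fst (snd (stepc \<alpha> q s))) (snd (snd (stepc \<alpha> q s))) = (q, s)"
proof -
  have q: "q < 15" using assms(1) valid_def by auto
  show ?thesis
  using valid_cases[OF assms(1)] q15[OF q] tsym_cases[of \<alpha>] assms(2,3)
  apply (elim disjE exE conjE)
  apply (simp_all add: stepc_def cstep_def cop_def invS_def inF_def butlast_append)
  done
qed

lemma inv_e:
  assumes "valid q s"
  shows "valid (fst (invLM q s)) (snd (invLM q s)) \<and> stepc LM (fst (invLM q s)) (snd (invLM q s)) = (Stay, q, s)"
proof -
  have q: "q < 15" using assms(1) valid_def by auto
  show ?thesis
  using valid_cases[OF assms(1)] q15[OF q]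
  apply (elim disjE exE conjE)
  apply (simp_all add: stepc_def invLM_def valid_app)
  apply (simp_all add: valid_def)
  done
qed

lemma inv_f:
  assumes "valid q s" "inF q s" "\<alpha> \<noteq> RM"
  shows "valid (fst (invR \<alpha> q s)) (snd (invR \<alpha> q s)) \<and> stepc \<alpha> (fst (invR \<alpha> q s)) (snd (invR \<alpha> q s)) = (Right, q, s)"
proof -
  have q: "q < 15" using assms(1) valid_def by auto
  show ?thesis
  using valid_cases[OF assms(1)] q15[OF q] tsym_cases[of \<alpha>] assms(2,3)
  apply (elim disjE exE conjE)
  apply (simp_all add: stepc_def cstep_def cop_def invR_def inF_def valid_app)
  apply (simp_all add: valid_def hd_append tl_append2)
  done
qed

lemma inv_g:
  assumes "valid q s" "\<not> inF q s" "\<alpha> \<noteq> LM"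
  shows "valid (fst (invS \<alpha> q s)) (snd (invS \<alpha> q s)) \<and> stepc \<alpha> (fst (invS \<alpha> q s)) (snd (invS \<alpha> q s)) = (Stay, q, s)"
proof -
  have q: "q < 15" using assms(1) valid_def by auto
  show ?thesis
  using valid_cases2[OF assms(1)] q15[OF q] tsym_cases[of \<alpha>] assms(2,3)
  apply (elim disjE exE conjE)
  apply (simp_all add: stepc_def cstep_def cop_def invS_def inF_def valid_app)
  apply (simp_all add: valid_def hd_append tl_append2)
  done
qed



definition ocoef :: "nat \<Rightarrow> nat \<Rightarrow> real" where
  "ocoef i j = (if j = 0 then sqrt (1/3)
     else if j = 1 then (if i = 0 then sqrt (1/2) else if i = 1 then - sqrt (1/2) else 0)
     else (if i = 2 then - 2 * sqrt (1/6) else sqrt (1/6)))"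

definition mreal :: "letter tsym \<Rightarrow> stsym \<Rightarrow> nat \<Rightarrow> nat \<Rightarrow> real" where
  "mreal \<alpha> \<beta> a b = (if \<alpha> = LM \<and> \<beta> = Z0 \<and> a < 3 \<and> b < 3 then ocoef a b else if a = b then 1 else 0)"

definition mixm :: "letter tsym \<Rightarrow> stsym \<Rightarrow> nat \<Rightarrow> nat \<Rightarrow> complex" where
  "mixm \<alpha> \<beta> a b = complex_of_real (mreal \<alpha> \<beta> a b)"

lemma sum15: "(\<Sum>q::nat<15. f q) = f 0 + f 1 + f 2 + f 3 + f 4 + f 5 + f 6 + f 7 + f 8 + f 9 + f 10 + f 11 + f 12 + f 13 + (f 14 :: real)"
  by (simp add: numeral_eq_Suc)

lemma mreal_id: "\<not> (\<alpha> = LM \<and> \<beta> = Z0) \<Longrightarrow> mreal \<alpha> \<beta> a b = (if a = b then 1 else 0)"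
  unfolding mreal_def by auto

lemma mreal_mix: "\<alpha> = LM \<and> \<beta> = Z0 \<Longrightarrow> mreal \<alpha> \<beta> a b = (if a < 3 \<and> b < 3 then ocoef a b else if a = b then 1 else 0)"
  unfolding mreal_def by auto

lemma sq3: "sqrt (1/3) * sqrt (1/3) = (1/3::real)" by simp
lemma sq2: "sqrt (1/2) * sqrt (1/2) = (1/2::real)" by simp
lemma sq6: "sqrt (1/6) * sqrt (1/6) = (1/6::real)" by simp

lemma mreal_col:
  assumes "a < 15" "b < 15"
  shows "(\<Sum>q<15. mreal \<alpha> \<beta> q a * mreal \<alpha> \<beta> q b) = (if a = b then 1 else 0)"
proof (cases "\<alpha> = LM \<and> \<beta> = Z0")
  case False
  then show ?thesis using q15[OF assms(1)] q15[OF assms(2)]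
    apply (elim disjE)
    apply (simp_all add: sum15 mreal_id)
    done
next
  case True
  then show ?thesis using q15[OF assms(1)] q15[OF assms(2)]
    apply (elim disjE)
    apply (simp_all add: sum15 mreal_mix ocoef_def sq3 sq2 sq6 algebra_simps)
    done
qed

lemma mreal_row:
  assumes "a < 15" "b < 15"
  shows "(\<Sum>q<15. mreal \<alpha> \<beta> a q * mreal \<alpha> \<beta> b q) = (if a = b then 1 else 0)"
proof (cases "\<alpha> = LM \<and> \<beta> = Z0")
  case False
  then show ?thesis using q15[OF assms(1)] q15[OF assms(2)]
    apply (elim disjE)
    apply (simp_all add: sum15 mreal_id)
    done
next
  case True
  then show ?thesis using q15[OF assms(1)] q15[OF assms(2)]
    apply (elim disjE)
    apply (simp_all add: sum15 mreal_mix ocoef_def sq3 sq2 sq6 algebra_simps)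
    done
qed



definition dlt :: "nat \<Rightarrow> letter tsym \<Rightarrow> stsym \<Rightarrow> nat \<Rightarrow> dir \<Rightarrow> stsym list \<Rightarrow> complex" where
  "dlt q \<alpha> \<beta> q' d \<omega> = (if q < 15 \<and> \<beta> \<in> {Z0, S 0, S 1} then
      (\<Sum>q''<15. mixm \<alpha> \<beta> q'' q * (if stepf q'' \<alpha> \<beta> = (q', d, \<omega>) then 1 else 0)) else 0)"

definition QA :: "letter qpa" where
  "QA = \<lparr>states = {..<15}, stk = {0, 1}, init = 0, acc = {9, 10, 11}, rej = {12, 13, 14}, delta = dlt\<rparr>"

definition PiF :: "letter cfg \<Rightarrow> letter cfg" where
  "PiF c = (case c of (x, p, q, s) \<Rightarrow>
     (case stepc (tape x p) q s of (d, q', s') \<Rightarrow> (x, if d = Right then Suc p else p, q', s')))"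

definition PiInv :: "letter cfg \<Rightarrow> letter cfg" where
  "PiInv c = (case c of (x, p, q, s) \<Rightarrow>
     (if p = 0 then (case invLM q s of (q2, s2) \<Rightarrow> (x, 0, q2, s2))
      else if inF q s then (case invR (tape x (p - 1)) q s of (q2, s2) \<Rightarrow> (x, p - 1, q2, s2))
      else (case invS (tape x p) q s of (q2, s2) \<Rightarrow> (x, p, q2, s2))))"

lemma configs_QA: "(x, p, q, s) \<in> configs QA \<longleftrightarrow> p \<le> length x + 1 \<and> valid q s"
  unfolding configs_def QA_def valid_def by auto

lemma tape_LM: "tape x p = LM \<longleftrightarrow> p = 0"
  unfolding tape_def by auto

lemma tape_RM: "tape x p = RM \<longleftrightarrow> p > length x"
  unfolding tape_def by auto

lemma stepc_valid:
  assumes "valid q s" "stepc \<alpha> q s = (d, q', s')"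
  shows "valid q' s' \<and> (\<alpha> = RM \<longrightarrow> d = Stay)"
  using stepc_valid0[OF assms(1), of \<alpha>] assms(2) by (cases "\<alpha> = RM") auto

lemma PiF_in: assumes "c \<in> configs QA" shows "PiF c \<in> configs QA"
proof -
  obtain x p q s where c: "c = (x, p, q, s)" by (cases c) auto
  obtain d q' s' where st: "stepc (tape x p) q s = (d, q', s')" by (cases "stepc (tape x p) q s") auto
  have v: "valid q s" "p \<le> length x + 1" using assms c configs_QA by auto
  from stepc_valid[OF v(1) st] have "valid q' s'" "tape x p = RM \<longrightarrow> d = Stay" by auto
  moreover have "d = Right \<Longrightarrow> p \<le> length x" using calculation(2) tape_RM[of x p] by (cases d) auto
  ultimately show ?thesis using c st v by (auto simp: PiF_def configs_QA)
qed

lemma PiInv_PiF: assumes "c \<in> configs QA" shows "PiInv (PiF c) = c"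
proof -
  obtain x p q s where c: "c = (x, p, q, s)" by (cases c) auto
  obtain d q' s' where st: "stepc (tape x p) q s = (d, q', s')" by (cases "stepc (tape x p) q s") auto
  have v: "valid q s" "p \<le> length x + 1" using assms c configs_QA by auto
  show ?thesis
  proof (cases d)
    case Stay
    show ?thesis
    proof (cases "p = 0")
      case True
      then have "tape x p = LM" by (simp add: tape_LM)
      then show ?thesis using inv_b[OF v(1)] st Stay True c by (simp add: PiF_def PiInv_def)
    next
      case False
      then have "tape x p \<noteq> LM" by (simp add: tape_LM)
      then show ?thesis using inv_d[OF v(1), of "tape x p"] st Stay False c by (simp add: PiF_def PiInv_def)
    qed
  next
    case Right
    have "tape x p \<noteq> RM" using stepc_valid[OF v(1) st] Right by auto
    then show ?thesis using inv_c[OF v(1), of "tape x p"] st Right c by (simp add: PiF_def PiInv_def)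
  qed
qed

lemma PiInv_in: assumes "c \<in> configs QA" shows "PiInv c \<in> configs QA \<and> PiF (PiInv c) = c"
proof -
  obtain x p q s where c: "c = (x, p, q, s)" by (cases c) auto
  have v: "valid q s" "p \<le> length x + 1" using assms c configs_QA by auto
  show ?thesis
  proof (cases "p = 0")
    case True
    then have "tape x 0 = LM" by (simp add: tape_LM)
    then show ?thesis using inv_e[OF v(1)] True c v
      by (auto simp: PiF_def PiInv_def configs_QA split: prod.splits)
  next
    case p0: False
    show ?thesis
    proof (cases "inF q s")
      case True
      have "tape x (p - 1) \<noteq> RM" using v p0 by (simp add: tape_RM)
      then show ?thesis using inv_f[OF v(1) True, of "tape x (p - 1)"] True p0 c v
        by (auto simp: PiF_def PiInv_def configs_QA split: prod.splits)
    next
      case False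
      have "tape x p \<noteq> LM" using p0 by (simp add: tape_LM)
      then show ?thesis using inv_g[OF v(1) False, of "tape x p"] False p0 c v
        by (auto simp: PiF_def PiInv_def configs_QA split: prod.splits)
    qed
  qed
qed

lemma PiF_bij: "bij_betw PiF (configs QA) (configs QA)"
  apply (rule bij_betwI[where g = PiInv])
  using PiF_in PiInv_in PiInv_PiF by auto

lemma PiF_inj: "c \<in> configs QA \<Longrightarrow> d \<in> configs QA \<Longrightarrow> PiF c = PiF d \<longleftrightarrow> c = d"
  by (metis PiInv_PiF)



lemma KL:
  assumes "s \<noteq> []"
  shows "((x', p', q', s') = PiF (x, p, q2, s)) \<longleftrightarrow>
    (x' = x \<and> (p' = p \<or> p' = Suc p) \<and> length s \<le> length s' + 1 \<and> take (length s - 1) s' = butlast s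
     \<and> stepf q2 (tape x p) (last s) = (q', if p' = p then Stay else Right, drop (length s - 1) s'))"
proof -
  obtain q'' d \<omega> where st: "stepf q2 (tape x p) (last s) = (q'', d, \<omega>)" by (cases "stepf q2 (tape x p) (last s)") auto
  have pf: "PiF (x, p, q2, s) = (x, if d = Right then Suc p else p, q'', butlast s @ \<omega>)"
    by (simp add: PiF_def stepc_def st)
  have lb: "length (butlast s) = length s - 1" by simp
  show ?thesis
  proof
    assume h: "(x', p', q', s') = PiF (x, p, q2, s)"
    then have e: "x' = x" "p' = (if d = Right then Suc p else p)" "q' = q''" "s' = butlast s @ \<omega>" using pf by auto
    have "take (length s - 1) s' = butlast s" "drop (length s - 1) s' = \<omega>" using e(4) lb by auto
    moreover have "length s \<le> length s' + 1" using e(4) assms by auto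
    moreover have "(if p' = p then Stay else Right) = d" using e(2) by (cases d) auto
    ultimately show "x' = x \<and> (p' = p \<or> p' = Suc p) \<and> length s \<le> length s' + 1 \<and> take (length s - 1) s' = butlast s
     \<and> stepf q2 (tape x p) (last s) = (q', if p' = p then Stay else Right, drop (length s - 1) s')"
      using e st by auto
  next
    assume h: "x' = x \<and> (p' = p \<or> p' = Suc p) \<and> length s \<le> length s' + 1 \<and> take (length s - 1) s' = butlast s
     \<and> stepf q2 (tape x p) (last s) = (q', if p' = p then Stay else Right, drop (length s - 1) s')"
    then have e: "q' = q''" "d = (if p' = p then Stay else Right)" "\<omega> = drop (length s - 1) s'" using st by auto
    have "s' = butlast s @ \<omega>" using h e(3) by (metis append_take_drop_id)
    moreover have "p' = (if d = Right then Suc p else p)" using h e(2) by auto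
    ultimately show "(x', p', q', s') = PiF (x, p, q2, s)" using pf h e by auto
  qed
qed

lemma valid_last: "valid q s \<Longrightarrow> last s \<in> {Z0, S 0, S 1}"
  using valid_cases[of q s] by auto

lemma amp_QA:
  assumes "valid q s"
  shows "amp QA c' (x, p, q, s) = (\<Sum>q''<15. mixm (tape x p) (last s) q'' q * (if c' = PiF (x, p, q'', s) then 1 else 0))"
proof -
  obtain x' p' q' s' where c': "c' = (x', p', q', s')" by (cases c') auto
  have s: "s \<noteq> []" "q < 15" using assms valid_def by auto
  have l: "last s \<in> {Z0, S 0, S 1}" using valid_last[OF assms] .
  let ?C = "x' = x \<and> (p' = p \<or> p' = Suc p) \<and> length s \<le> length s' + 1 \<and> take (length s - 1) s' = butlast s"
  show ?thesis
  proof (cases ?C)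
    case True
    then show ?thesis using c' s l KL[OF s(1), of x' p' q' s' x p]
      by (simp add: QA_def dlt_def)
  next
    case False
    have h: "\<And>q2. c' \<noteq> PiF (x, p, q2, s)" using KL[OF s(1), of x' p' q' s' x p] False c' by metis
    have "amp QA c' (x, p, q, s) = 0" using False c' by auto
    then show ?thesis using h by simp
  qed
qed

lemma sum_delta15:
  assumes "(qf::nat) < 15"
  shows "(\<Sum>q''::nat<15. g q'' * (if P \<and> qf = q'' then 1 else 0)) = (if P then g qf else (0::complex))"
proof -
  have "(\<lambda>q''. g q'' * (if P \<and> qf = q'' then 1 else 0)) = (\<lambda>q''. if q'' = qf then (if P then g qf else 0) else 0)"
    by auto
  then have "(\<Sum>q''::nat<15. g q'' * (if P \<and> qf = q'' then 1 else 0)) = (\<Sum>q''::nat<15. if q'' = qf then (if P then g qf else 0) else 0)"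
    by metis
  also have "\<dots> = (if P then g qf else 0)" using assms by (subst sum.delta) auto
  finally show ?thesis .
qed

lemma amp_PiF:
  assumes f: "(xf, pf, qf, sf) \<in> configs QA" and c: "(x, p, q, s) \<in> configs QA"
  shows "amp QA (PiF (xf, pf, qf, sf)) (x, p, q, s) =
    (if xf = x \<and> pf = p \<and> sf = s then mixm (tape x p) (last s) qf q else 0)"
proof -
  have v: "valid q s" "p \<le> length x + 1" using c configs_QA by auto
  have qf: "qf < 15" using f configs_QA valid_def by auto
  have "\<And>q''. q'' < 15 \<Longrightarrow> (PiF (xf, pf, qf, sf) = PiF (x, p, q'', s)) = ((xf = x \<and> pf = p \<and> sf = s) \<and> qf = q'')"
  proof -
    fix q'' :: nat assume "q'' < 15"
    then have "(x, p, q'', s) \<in> configs QA" using v by (auto simp: configs_QA valid_def)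
    then show "(PiF (xf, pf, qf, sf) = PiF (x, p, q'', s)) = ((xf = x \<and> pf = p \<and> sf = s) \<and> qf = q'')"
      using PiF_inj[OF f] by auto
  qed
  then have "amp QA (PiF (xf, pf, qf, sf)) (x, p, q, s) =
     (\<Sum>q''<15. mixm (tape x p) (last s) q'' q * (if (xf = x \<and> pf = p \<and> sf = s) \<and> qf = q'' then 1 else 0))"
    unfolding amp_QA[OF v(1)] by (intro sum.cong) auto
  also have "\<dots> = (if xf = x \<and> pf = p \<and> sf = s then mixm (tape x p) (last s) qf q else 0)"
    by (rule sum_delta15[OF qf])
  finally show ?thesis .
qed



lemma infsum_fiber:
  assumes "p \<le> length x + 1" "valid q0 s"
    and "\<And>f. f \<in> configs QA \<Longrightarrow> G f \<noteq> 0 \<Longrightarrow> (\<exists>q'. f = (x, p, q', s))"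
  shows "infsum G (configs QA) = (\<Sum>q'<15. G (x, p, q', s))"
proof -
  let ?T = "(\<lambda>q'. (x, p, q', s)) ` {..<15::nat}"
  have sub: "?T \<subseteq> configs QA" using assms(1,2) by (auto simp: configs_QA valid_def)
  have "infsum G (configs QA) = infsum G ?T"
  proof (rule infsum_cong_neutral)
    fix f assume f: "f \<in> configs QA - ?T"
    show "G f = 0"
    proof (rule ccontr)
      assume "G f \<noteq> 0"
      then obtain q' where "f = (x, p, q', s)" using assms(3) f by blast
      moreover have "q' < 15" using f calculation by (auto simp: configs_QA valid_def)
      ultimately show False using f by auto
    qed
  qed (use sub in auto)
  also have "\<dots> = sum G ?T" by simp
  also have "\<dots> = (\<Sum>q'<15. G (x, p, q', s))"
    by (subst sum.reindex) (auto simp: inj_on_def)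
  finally show ?thesis .
qed

lemma cnj_mixm[simp]: "cnj (mixm \<alpha> \<beta> a b) = mixm \<alpha> \<beta> a b"
  by (simp add: mixm_def)

lemma mixm_col: "a < 15 \<Longrightarrow> b < 15 \<Longrightarrow> (\<Sum>q<15. mixm \<alpha> \<beta> q a * mixm \<alpha> \<beta> q b) = (if a = b then 1 else 0)"
proof -
  assume a: "a < 15" "b < 15"
  have "(\<Sum>q<15. mixm \<alpha> \<beta> q a * mixm \<alpha> \<beta> q b) = complex_of_real (\<Sum>q<15. mreal \<alpha> \<beta> q a * mreal \<alpha> \<beta> q b)"
    by (simp add: mixm_def)
  also have "\<dots> = (if a = b then 1 else 0)" using mreal_col[OF a] by simp
  finally show ?thesis .
qed

lemma mixm_row: "a < 15 \<Longrightarrow> b < 15 \<Longrightarrow> (\<Sum>q<15. mixm \<alpha> \<beta> a q * mixm \<alpha> \<beta> b q) = (if a = b then 1 else 0)"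
proof -
  assume a: "a < 15" "b < 15"
  have "(\<Sum>q<15. mixm \<alpha> \<beta> a q * mixm \<alpha> \<beta> b q) = complex_of_real (\<Sum>q<15. mreal \<alpha> \<beta> a q * mreal \<alpha> \<beta> b q)"
    by (simp add: mixm_def)
  also have "\<dots> = (if a = b then 1 else 0)" using mreal_row[OF a] by simp
  finally show ?thesis .
qed

lemma col_QA:
  assumes c: "c \<in> configs QA" and d: "d \<in> configs QA"
  shows "(\<Sum>\<^sub>\<infinity>e\<in>configs QA. cnj (amp QA e c) * amp QA e d) = (if c = d then 1 else 0)"
proof -
  obtain x p q s where cc: "c = (x, p, q, s)" by (cases c) auto
  obtain x2 p2 q2 s2 where dd: "d = (x2, p2, q2, s2)" by (cases d) auto
  have vc: "valid q s" "p \<le> length x + 1" using c cc configs_QA by auto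
  have vd: "valid q2 s2" "p2 \<le> length x2 + 1" using d dd configs_QA by auto
  have "(\<Sum>\<^sub>\<infinity>e\<in>configs QA. cnj (amp QA e c) * amp QA e d)
      = (\<Sum>\<^sub>\<infinity>f\<in>configs QA. cnj (amp QA (PiF f) c) * amp QA (PiF f) d)"
    by (rule infsum_reindex_bij_betw[OF PiF_bij, symmetric])
  also have "\<dots> = (\<Sum>\<^sub>\<infinity>f\<in>configs QA. (case f of (xf, pf, qf, sf) \<Rightarrow>
       cnj (if xf = x \<and> pf = p \<and> sf = s then mixm (tape x p) (last s) qf q else 0) *
       (if xf = x2 \<and> pf = p2 \<and> sf = s2 then mixm (tape x2 p2) (last s2) qf q2 else 0)))"
    apply (rule infsum_cong)
    subgoal for f using amp_PiF[of "fst f" "fst (snd f)" "fst (snd (snd f))" "snd (snd (snd f))"] c d cc dd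
      by (cases f) auto
    done
  also have "\<dots> = (if c = d then 1 else 0)"
  proof (cases "x = x2 \<and> p = p2 \<and> s = s2")
    case True
    have "(\<Sum>\<^sub>\<infinity>f\<in>configs QA. (case f of (xf, pf, qf, sf) \<Rightarrow>
       cnj (if xf = x \<and> pf = p \<and> sf = s then mixm (tape x p) (last s) qf q else 0) *
       (if xf = x2 \<and> pf = p2 \<and> sf = s2 then mixm (tape x2 p2) (last s2) qf q2 else 0)))
       = (\<Sum>q'<15. mixm (tape x p) (last s) q' q * mixm (tape x p) (last s) q' q2)"
      apply (subst infsum_fiber[OF vc(2) vc(1)])
      using True by (auto split: if_splits)
    also have "\<dots> = (if q = q2 then 1 else 0)"
      using mixm_col vc vd valid_def by auto
    finally show ?thesis using True cc dd by auto
  next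
    case False
    have "(\<Sum>\<^sub>\<infinity>f\<in>configs QA. (case f of (xf, pf, qf, sf) \<Rightarrow>
       cnj (if xf = x \<and> pf = p \<and> sf = s then mixm (tape x p) (last s) qf q else 0) *
       (if xf = x2 \<and> pf = p2 \<and> sf = s2 then mixm (tape x2 p2) (last s2) qf q2 else 0))) = 0"
      by (rule infsum_0) (use False in auto)
    then show ?thesis using False cc dd by auto
  qed
  finally show ?thesis .
qed

lemma amp_PiF':
  assumes f: "f \<in> configs QA" and e: "e \<in> configs QA"
  shows "amp QA (PiF f) e = (case f of (xf, pf, qf, sf) \<Rightarrow> case e of (x, p, q, s) \<Rightarrow>
    (if xf = x \<and> pf = p \<and> sf = s then mixm (tape x p) (last s) qf q else 0))"
  using amp_PiF[of "fst f" "fst (snd f)" "fst (snd (snd f))" "snd (snd (snd f))"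
     "fst e" "fst (snd e)" "fst (snd (snd e))" "snd (snd (snd e))"] f e
  by (cases f, cases e) auto

lemma row_QA:
  assumes c: "c \<in> configs QA" and d: "d \<in> configs QA"
  shows "(\<Sum>\<^sub>\<infinity>e\<in>configs QA. amp QA c e * cnj (amp QA d e)) = (if c = d then 1 else 0)"
proof -
  define f where "f = PiInv c"
  define g where "g = PiInv d"
  have f: "f \<in> configs QA" "PiF f = c" using PiInv_in[OF c] f_def by auto
  have g: "g \<in> configs QA" "PiF g = d" using PiInv_in[OF d] g_def by auto
  obtain x p q s where ff: "f = (x, p, q, s)" by (cases f) auto
  obtain x2 p2 q2 s2 where gg: "g = (x2, p2, q2, s2)" by (cases g) auto
  have vf: "valid q s" "p \<le> length x + 1" using f ff configs_QA by auto
  have vg: "valid q2 s2" "p2 \<le> length x2 + 1" using g gg configs_QA by auto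
  have cd: "(c = d) = (f = g)" using f g PiF_inj by metis
  have "(\<Sum>\<^sub>\<infinity>e\<in>configs QA. amp QA c e * cnj (amp QA d e))
     = (\<Sum>\<^sub>\<infinity>e\<in>configs QA. (case e of (xe, pe, qe, se) \<Rightarrow>
        (if x = xe \<and> p = pe \<and> s = se then mixm (tape xe pe) (last se) q qe else 0) *
        cnj (if x2 = xe \<and> p2 = pe \<and> s2 = se then mixm (tape xe pe) (last se) q2 qe else 0)))"
    apply (rule infsum_cong)
    subgoal for e using amp_PiF'[OF f(1), of e] amp_PiF'[OF g(1), of e] f(2) g(2) ff gg
      by (cases e) auto
    done
  also have "\<dots> = (if c = d then 1 else 0)"
  proof (cases "x = x2 \<and> p = p2 \<and> s = s2")
    case True
    have "(\<Sum>\<^sub>\<infinity>e\<in>configs QA. (case e of (xe, pe, qe, se) \<Rightarrow>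
        (if x = xe \<and> p = pe \<and> s = se then mixm (tape xe pe) (last se) q qe else 0) *
        cnj (if x2 = xe \<and> p2 = pe \<and> s2 = se then mixm (tape xe pe) (last se) q2 qe else 0)))
       = (\<Sum>q'<15. mixm (tape x p) (last s) q q' * mixm (tape x p) (last s) q2 q')"
      apply (subst infsum_fiber[OF vf(2) vf(1)])
      using True by (auto split: if_splits)
    also have "\<dots> = (if q = q2 then 1 else 0)"
      using mixm_row vf vg valid_def by auto
    finally show ?thesis using True cd ff gg by auto
  next
    case False
    have "(\<Sum>\<^sub>\<infinity>e\<in>configs QA. (case e of (xe, pe, qe, se) \<Rightarrow>
        (if x = xe \<and> p = pe \<and> s = se then mixm (tape xe pe) (last se) q qe else 0) *
        cnj (if x2 = xe \<and> p2 = pe \<and> s2 = se then mixm (tape xe pe) (last se) q2 qe else 0))) = 0"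
      by (rule infsum_0) (use False in auto)
    then show ?thesis using False cd ff gg by auto
  qed
  finally show ?thesis .
qed

lemma unitary_QA: "unitary_mat (configs QA) (amp QA)"
  unfolding unitary_mat_def using col_QA row_QA by auto



lemma stepf_props0:
  assumes "q < 15" "\<beta> = Z0 \<or> \<beta> = S 0 \<or> \<beta> = S 1"
  shows "(let r = stepf q \<alpha> \<beta>; q' = fst r; d = fst (snd r); \<omega> = snd (snd r) in
     q' < 15 \<and> set \<omega> \<subseteq> {Z0, S 0, S 1} \<and> length \<omega> \<le> 2 \<and>
        (length \<omega> = 2 \<longrightarrow> \<omega> ! 0 = \<beta>) \<and>
        (\<beta> = Z0 \<longrightarrow> \<omega> \<noteq> [] \<and> hd \<omega> = Z0 \<and> set (tl \<omega>) \<subseteq> {S 0, S 1}) \<and>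
        (\<beta> \<noteq> Z0 \<longrightarrow> set \<omega> \<subseteq> {S 0, S 1}) \<and>
        (\<alpha> = RM \<longrightarrow> d = Stay))"
  using q15[OF assms(1)] tsym_cases[of \<alpha>] assms(2)
  apply (elim disjE)
  apply (simp_all add: cstep_def cop_def Let_def)
  done

lemma stepf_props:
  assumes "q < 15" "\<beta> = Z0 \<or> \<beta> = S 0 \<or> \<beta> = S 1" "stepf q \<alpha> \<beta> = (q', d, \<omega>)"
  shows "q' < 15 \<and> set \<omega> \<subseteq> {Z0, S 0, S 1} \<and> length \<omega> \<le> 2 \<and>
        (length \<omega> = 2 \<longrightarrow> \<omega> ! 0 = \<beta>) \<and>
        (\<beta> = Z0 \<longrightarrow> \<omega> \<noteq> [] \<and> hd \<omega> = Z0 \<and> set (tl \<omega>) \<subseteq> {S 0, S 1}) \<and>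
        (\<beta> \<noteq> Z0 \<longrightarrow> set \<omega> \<subseteq> {S 0, S 1}) \<and>
        (\<alpha> = RM \<longrightarrow> d = Stay)"
  using stepf_props0[OF assms(1,2), of \<alpha>] assms(3) by (simp add: Let_def)


lemma dlt_nz:
  assumes "dlt q \<alpha> \<beta> q' d \<omega> \<noteq> 0"
  shows "q < 15 \<and> (\<beta> = Z0 \<or> \<beta> = S 0 \<or> \<beta> = S 1) \<and> (\<exists>q''<15. stepf q'' \<alpha> \<beta> = (q', d, \<omega>))"
proof -
  have c: "q < 15 \<and> \<beta> \<in> {Z0, S 0, S 1}"
  proof (rule ccontr)
    assume "\<not> (q < 15 \<and> \<beta> \<in> {Z0, S 0, S 1})"
    then have "dlt q \<alpha> \<beta> q' d \<omega> = 0" unfolding dlt_def by argo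
    then show False using assms by argo
  qed
  then have "dlt q \<alpha> \<beta> q' d \<omega> = (\<Sum>q''<15. mixm \<alpha> \<beta> q'' q * (if stepf q'' \<alpha> \<beta> = (q', d, \<omega>) then 1 else 0))"
    unfolding dlt_def by argo
  then have "(\<Sum>q''<15. mixm \<alpha> \<beta> q'' q * (if stepf q'' \<alpha> \<beta> = (q', d, \<omega>) then 1 else 0)) \<noteq> 0"
    using assms by argo
  then obtain q'' where q'': "q'' \<in> {..<15}" "mixm \<alpha> \<beta> q'' q * (if stepf q'' \<alpha> \<beta> = (q', d, \<omega>) then 1 else 0) \<noteq> 0"
    by (meson sum.not_neutral_contains_not_neutral)
  have "stepf q'' \<alpha> \<beta> = (q', d, \<omega>)"
  proof (rule ccontr)
    assume "stepf q'' \<alpha> \<beta> \<noteq> (q', d, \<omega>)"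
    then show False using q''(2) by simp
  qed
  then show ?thesis using c q'' by auto
qed

lemma is_QPA_QA: "is_QPA QA"
proof -
  have DS: "Delta_set QA = {Z0, S 0, S 1}" by (auto simp: Delta_set_def QA_def)
  have ST: "S ` stk QA = {S 0, S 1}" by (simp add: QA_def)
  have SQ: "states QA = {..<15}" by (simp add: QA_def)
  have D: "delta QA = dlt" by (simp add: QA_def)
  have main: "\<forall>q \<alpha> \<beta> q' d \<omega>. delta QA q \<alpha> \<beta> q' d \<omega> \<noteq> 0 \<longrightarrow>
        q \<in> states QA \<and> q' \<in> states QA \<and> \<beta> \<in> Delta_set QA \<and> set \<omega> \<subseteq> Delta_set QA \<and>
        length \<omega> \<le> 2 \<and>
        (length \<omega> = 2 \<longrightarrow> \<omega> ! 0 = \<beta>) \<and>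
        (\<beta> = Z0 \<longrightarrow> \<omega> \<noteq> [] \<and> hd \<omega> = Z0 \<and> set (tl \<omega>) \<subseteq> S ` stk QA) \<and>
        (\<beta> \<noteq> Z0 \<longrightarrow> set \<omega> \<subseteq> S ` stk QA) \<and>
        (\<alpha> = RM \<longrightarrow> d = Stay)"
  proof (intro allI impI)
    fix q \<alpha> \<beta> q' d \<omega>
    assume nz: "delta QA q \<alpha> \<beta> q' d \<omega> \<noteq> 0"
    then have h: "q < 15 \<and> (\<beta> = Z0 \<or> \<beta> = S 0 \<or> \<beta> = S 1) \<and> (\<exists>q''<15. stepf q'' \<alpha> \<beta> = (q', d, \<omega>))"
      using dlt_nz D by metis
    then obtain q'' where q'': "q'' < 15" "stepf q'' \<alpha> \<beta> = (q', d, \<omega>)" by blast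
    have b: "\<beta> = Z0 \<or> \<beta> = S 0 \<or> \<beta> = S 1" using h by blast
    note P = stepf_props[OF q''(1) b q''(2)]
    have "\<beta> \<in> Delta_set QA" using b DS by auto
    moreover have "set \<omega> \<subseteq> Delta_set QA" using P DS by simp
    ultimately show "q \<in> states QA \<and> q' \<in> states QA \<and> \<beta> \<in> Delta_set QA \<and> set \<omega> \<subseteq> Delta_set QA \<and>
        length \<omega> \<le> 2 \<and>
        (length \<omega> = 2 \<longrightarrow> \<omega> ! 0 = \<beta>) \<and>
        (\<beta> = Z0 \<longrightarrow> \<omega> \<noteq> [] \<and> hd \<omega> = Z0 \<and> set (tl \<omega>) \<subseteq> S ` stk QA) \<and>
        (\<beta> \<noteq> Z0 \<longrightarrow> set \<omega> \<subseteq> S ` stk QA) \<and>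
        (\<alpha> = RM \<longrightarrow> d = Stay)"
      using P h ST SQ by simp
  qed
  have fin: "finite (states QA)" "finite (stk QA)" "init QA \<in> states QA"
     "acc QA \<subseteq> states QA" "rej QA \<subseteq> states QA" "acc QA \<inter> rej QA = {}"
    by (simp_all add: QA_def)
  show ?thesis unfolding is_QPA_def using fin main unitary_QA by blast
qed



definition val :: "nat \<Rightarrow> letter list \<Rightarrow> int" where
  "val j w = sum_list (map (cop j) w)"

definition enc :: "nat \<Rightarrow> int \<Rightarrow> nat \<times> stsym list" where
  "enc j v = (if v \<ge> 0 then (3 + j, Z0 # replicate (nat v) (S 0)) else (6 + j, Z0 # replicate (nat (- v - 1)) (S 0)))"

lemma rl1[simp]: "last (Z0 # replicate (Suc n) x) = x"
  by (induct n) auto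
lemma rl2[simp]: "butlast (Z0 # replicate (Suc n) x) = Z0 # replicate n x"
  by (induct n) auto
lemma rl3: "butlast (Z0 # replicate n x) @ [last (Z0 # replicate n x), y] = Z0 # replicate n x @ [y]"
  by (metis append_butlast_last_id append_Cons append_Nil list.distinct(1) append_assoc)

lemma rl4: "Z0 # replicate n x @ [x] = Z0 # replicate (Suc n) x"
  by (simp add: replicate_append_same)
lemma rl5: "Z0 # replicate n x @ [x, x] = Z0 # replicate (Suc (Suc n)) x"
  by (metis append_Cons append_Nil append_assoc replicate_append_same replicate_Suc)

lemma rl6: "butlast (replicate (Suc n) x) = replicate n x"
  by (induct n) auto
lemma rl7: "replicate n x @ [x] = replicate (Suc n) x"
  by (simp add: replicate_append_same)
lemma rl8: "replicate n x @ [x, x] = replicate (Suc (Suc n)) x"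
  by (metis append_Cons append_Nil append_assoc rl7)

lemma mod3: "(j::nat) < 3 \<Longrightarrow> (3 + j - 3) mod 3 = j" "(j::nat) < 3 \<Longrightarrow> (6 + j - 3) mod 3 = j"
  by auto

lemma enc_step:
  assumes j: "j < 3"
  shows "stepc (Sym \<sigma>) (fst (enc j v)) (snd (enc j v)) = (Right, enc j (v + cop j \<sigma>))"
proof -
  have c: "cop j \<sigma> = 0 \<or> cop j \<sigma> = 1 \<or> cop j \<sigma> = -1" by (cases \<sigma>) (auto simp: cop_def)
  consider (a) n where "v = int n + 1" | (b) "v = 0" | (c) "v = -1" | (d) n where "v = - int n - 2"
  proof -
    have "v \<ge> 1 \<or> v = 0 \<or> v = -1 \<or> v \<le> -2" by arith
    then show ?thesis using that(1)[of "nat (v-1)"] that(2) that(3) that(4)[of "nat (-v-2)"] by auto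
  qed
  then show ?thesis
  proof cases
    case a
    have nv: "nat v = Suc n" "nat (v + 1) = Suc (Suc n)" "nat (v - 1) = n" using a by auto
    show ?thesis using c j a nv
      by (auto simp del: replicate.simps simp: enc_def stepc_def cstep_def mod3 rl3 rl4 rl5 rl6 rl7 rl8)
  next
    case b
    show ?thesis using c j b
      by (auto simp: enc_def stepc_def cstep_def mod3)
  next
    case c
    show ?thesis using \<open>cop j \<sigma> = 0 \<or> cop j \<sigma> = 1 \<or> cop j \<sigma> = -1\<close> j c
      by (auto simp: enc_def stepc_def cstep_def mod3)
  next
    case d
    have nv: "nat (- v - 1) = Suc n" "nat (- (v + 1) - 1) = n" "nat (- (v - 1) - 1) = Suc (Suc n)" using d by auto
    show ?thesis using c j d nv
      by (auto simp del: replicate.simps simp: enc_def stepc_def cstep_def mod3 rl3 rl4 rl5 rl6 rl7 rl8)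
  qed
qed

lemma enc_RM:
  assumes j: "j < 3"
  shows "fst (stepc RM (fst (enc j v)) (snd (enc j v))) = Stay \<and>
         fst (snd (stepc RM (fst (enc j v)) (snd (enc j v)))) = (if v = 0 then 9 + j else 12 + j)"
proof -
  consider (a) n where "v = int n + 1" | (b) "v = 0" | (d) n where "v = - int n - 1"
  proof -
    have "v \<ge> 1 \<or> v = 0 \<or> v \<le> -1" by arith
    then show ?thesis using that(1)[of "nat (v-1)"] that(2) that(3)[of "nat (-v-1)"] by auto
  qed
  then show ?thesis
  proof cases
    case a
    have nv: "nat v = Suc n" using a by auto
    show ?thesis using j a nv by (auto simp: enc_def stepc_def)
  next
    case b
    show ?thesis using j b by (auto simp: enc_def stepc_def)
  next
    case d
    show ?thesis using j d by (auto simp: enc_def stepc_def)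
  qed
qed

lemma Uapp_vec:
  "Uapp A (\<lambda>c. \<Sum>j<(3::nat). if c = D j then a j else 0) c' = (\<Sum>j<3. a j * amp A c' (D j))"
proof -
  let ?T = "D ` {..<3}"
  have "Uapp A (\<lambda>c. \<Sum>j<(3::nat). if c = D j then a j else 0) c' =
        (\<Sum>\<^sub>\<infinity>c\<in>?T. amp A c' c * (\<Sum>j<(3::nat). if c = D j then a j else 0))"
    unfolding Uapp_def
  proof (rule infsum_cong_neutral)
    fix c assume "c \<in> UNIV - ?T"
    then have "\<forall>j\<in>{..<3}. (if c = D j then a j else 0) = 0" by auto
    then have "(\<Sum>j<(3::nat). if c = D j then a j else 0) = 0" by (rule sum.neutral)
    then show "amp A c' c * (\<Sum>j<(3::nat). if c = D j then a j else 0) = 0" by simp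
  qed auto
  also have "\<dots> = (\<Sum>c\<in>?T. amp A c' c * (\<Sum>j<(3::nat). if c = D j then a j else 0))" by simp
  also have "\<dots> = (\<Sum>c\<in>?T. \<Sum>j<(3::nat). if c = D j then a j * amp A c' (D j) else 0)"
    by (simp add: sum_distrib_left if_distrib mult.commute cong: if_cong)
  also have "\<dots> = (\<Sum>j<(3::nat). \<Sum>c\<in>?T. if c = D j then a j * amp A c' (D j) else 0)"
    by (rule sum.swap)
  also have "\<dots> = (\<Sum>j<3. a j * amp A c' (D j))"
    by (rule sum.cong) (auto simp: sum.delta')
  finally show ?thesis .
qed

lemma Uapp_single:
  "Uapp A (\<lambda>c. if c = c0 then 1 else 0) c' = amp A c' c0"
proof -
  have "Uapp A (\<lambda>c. if c = c0 then 1 else 0) c' = (\<Sum>\<^sub>\<infinity>c\<in>{c0}. amp A c' c * (if c = c0 then 1 else 0))"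
    unfolding Uapp_def by (rule infsum_cong_neutral) auto
  then show ?thesis by simp
qed

lemma Uapp_zero: "Uapp A (\<lambda>c. 0) c' = 0"
  unfolding Uapp_def by simp

lemma amp_nomix:
  assumes "valid q s" "p \<noteq> 0"
  shows "amp QA c' (x, p, q, s) = (if c' = PiF (x, p, q, s) then 1 else 0)"
proof -
  have t: "tape x p \<noteq> LM" using assms(2) by (simp add: tape_LM)
  have q: "q < 15" using assms(1) valid_def by auto
  have "amp QA c' (x, p, q, s) = (\<Sum>q''<15. (if q'' = q then (if c' = PiF (x, p, q, s) then 1 else 0) else 0))"
    unfolding amp_QA[OF assms(1)]
    by (rule sum.cong) (auto simp: mixm_def mreal_id t)
  also have "\<dots> = (if c' = PiF (x, p, q, s) then 1 else 0)" using q by simp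
  finally show ?thesis .
qed

lemma sum15c: "(\<Sum>q::nat<15. f q) = f 0 + f 1 + f 2 + f 3 + f 4 + f 5 + f 6 + f 7 + f 8 + f 9 + f 10 + f 11 + f 12 + f 13 + (f 14 :: complex)"
  by (simp add: numeral_eq_Suc)

definition o3 :: complex where "o3 = complex_of_real (sqrt (1/3))"

lemma amp_start:
  "amp QA c' (x, 0, 0, [Z0]) = (\<Sum>j<(3::nat). if c' = (x, 1, 3 + j, [Z0]) then o3 else 0)"
proof -
  have v: "valid 0 [Z0]" by (simp add: valid_def)
  show ?thesis
    unfolding amp_QA[OF v] sum15c
    by (simp add: mixm_def mreal_def ocoef_def PiF_def stepc_def tape_def o3_def numeral_eq_Suc)
qed

definition Dk :: "letter list \<Rightarrow> nat \<Rightarrow> nat \<Rightarrow> letter cfg" where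
  "Dk x k j = (x, k, fst (enc j (val j (take (k - 1) x))), snd (enc j (val j (take (k - 1) x))))"

definition vec :: "letter list \<Rightarrow> nat \<Rightarrow> letter cfg \<Rightarrow> complex" where
  "vec x k = (\<lambda>c. \<Sum>j<(3::nat). if c = Dk x k j then o3 else 0)"

lemma valid_enc: "j < 3 \<Longrightarrow> valid (fst (enc j v)) (snd (enc j v))"
  by (auto simp: enc_def valid_def)

lemma state_enc: "j < 3 \<Longrightarrow> 3 \<le> fst (enc j v) \<and> fst (enc j v) < 9"
  by (auto simp: enc_def)

lemma val_snoc: "val j (w @ [a]) = val j w + cop j a"
  by (simp add: val_def)

lemma PiF_Dk:
  assumes "j < 3" "1 \<le> k" "k \<le> length x"
  shows "PiF (Dk x k j) = Dk x (Suc k) j"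
proof -
  have t: "tape x k = Sym (x ! (k - 1))" using assms by (simp add: tape_def)
  obtain k' where k': "k = Suc k'" using assms(2) by (cases k) auto
  have tk: "take k x = take (k - 1) x @ [x ! (k - 1)]"
    using assms(3) k' by (simp add: take_Suc_conv_app_nth)
  show ?thesis
    using enc_step[OF assms(1), of "x ! (k - 1)" "val j (take (k - 1) x)"] t tk
    by (simp add: PiF_def Dk_def val_snoc case_prod_unfold)
qed

lemma vec_nz: "vec x k c \<noteq> 0 \<Longrightarrow> 3 \<le> cstate c \<and> cstate c < 9"
proof -
  assume h: "vec x k c \<noteq> 0"
  from h have "(\<Sum>j<(3::nat). if c = Dk x k j then o3 else 0) \<noteq> 0" by (simp only: vec_def not_False_eq_True)
  then obtain j where j: "j \<in> {..<(3::nat)}" "(if c = Dk x k j then o3 else 0) \<noteq> 0"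
    by (rule sum.not_neutral_contains_not_neutral)
  have jc1: "j < 3" using j(1) by simp
  have jc2: "c = Dk x k j"
  proof (rule ccontr)
    assume "c \<noteq> Dk x k j" then show False using j(2) by simp
  qed
  note jc = jc1 jc2
  have "cstate c = fst (enc j (val j (take (k - 1) x)))" using jc(2) by (simp add: Dk_def cstate_def)
  then show ?thesis using state_enc[OF jc(1)] by simp
qed


lemma filt_vec: "(\<lambda>c. if cstate c \<notin> acc QA \<union> rej QA then vec x k c else 0) = vec x k"
proof
  fix c
  show "(if cstate c \<notin> acc QA \<union> rej QA then vec x k c else 0) = vec x k c"
  proof (cases "cstate c \<notin> acc QA \<union> rej QA")
    case False
    then have "\<not> (3 \<le> cstate c \<and> cstate c < 9)" by (auto simp: QA_def)
    then have "vec x k c = 0" using vec_nz by blast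
    then show ?thesis by simp
  qed simp
qed

lemma Uapp_vec_step:
  assumes "1 \<le> k" "k \<le> length x"
  shows "Uapp QA (vec x k) = vec x (Suc k)"
proof
  fix c'
  have "Uapp QA (vec x k) c' = (\<Sum>j<3. o3 * amp QA c' (Dk x k j))"
    unfolding vec_def by (rule Uapp_vec)
  also have "\<dots> = (\<Sum>j<(3::nat). if c' = Dk x (Suc k) j then o3 else 0)"
  proof (rule sum.cong)
    fix j assume j: "j \<in> {..<(3::nat)}"
    have "amp QA c' (Dk x k j) = (if c' = PiF (Dk x k j) then 1 else 0)"
      using amp_nomix[OF valid_enc, of j] j assms unfolding Dk_def by auto
    then show "o3 * amp QA c' (Dk x k j) = (if c' = Dk x (Suc k) j then o3 else 0)"
      using PiF_Dk[of j k x] j assms by auto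
  qed simp
  finally show "Uapp QA (vec x k) c' = vec x (Suc k) c'" by (simp add: vec_def)
qed

lemma Dk1: "Dk x (Suc 0) j = (x, Suc 0, 3 + j, [Z0])"
  by (simp add: Dk_def val_def enc_def)

lemma Uapp_psi0: "Uapp QA (psi QA x 0) = vec x (Suc 0)"
proof
  fix c'
  have i: "init QA = 0" by (simp add: QA_def)
  show "Uapp QA (psi QA x 0) c' = vec x (Suc 0) c'"
    by (simp add: i Uapp_single amp_start vec_def Dk1)
qed

lemma psi_vec: "1 \<le> k \<Longrightarrow> k \<le> length x + 1 \<Longrightarrow> psi QA x k = vec x k"
proof (induct k)
  case 0 then show ?case by simp
next
  case (Suc k)
  show ?case
  proof (cases "k = 0")
    case True
    have "psi QA x (Suc 0) = (\<lambda>c. if cstate c \<notin> acc QA \<union> rej QA then Uapp QA (psi QA x 0) c else 0)"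
      by (rule psi.simps(2))
    also have "\<dots> = (\<lambda>c. if cstate c \<notin> acc QA \<union> rej QA then vec x (Suc 0) c else 0)"
      by (simp only: Uapp_psi0)
    also have "\<dots> = vec x (Suc 0)" by (rule filt_vec)
    finally show ?thesis using True by simp
  next
    case False
    then have "psi QA x k = vec x k" using Suc by auto
    moreover have "Uapp QA (vec x k) = vec x (Suc k)" using Suc False by (intro Uapp_vec_step) auto
    ultimately have "Uapp QA (psi QA x k) = vec x (Suc k)" by simp
    have "psi QA x (Suc k) = (\<lambda>c. if cstate c \<notin> acc QA \<union> rej QA then Uapp QA (psi QA x k) c else 0)"
      by (rule psi.simps(2))
    also have "\<dots> = (\<lambda>c. if cstate c \<notin> acc QA \<union> rej QA then vec x (Suc k) c else 0)"
      by (simp only: \<open>Uapp QA (psi QA x k) = vec x (Suc k)\<close>)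
    also have "\<dots> = vec x (Suc k)" by (rule filt_vec)
    finally show ?thesis .
  qed
qed

lemma Uapp_psi_le: "m \<le> length x \<Longrightarrow> Uapp QA (psi QA x m) = vec x (Suc m)"
proof (cases "m = 0")
  case True then show ?thesis by (simp only: Uapp_psi0)
next
  case False
  assume "m \<le> length x"
  then show ?thesis using False psi_vec[of m x] Uapp_vec_step[of m x] by simp
qed

definition Ef :: "letter list \<Rightarrow> nat \<Rightarrow> letter cfg" where
  "Ef x j = PiF (Dk x (length x + 1) j)"

lemma cstate_PiF: "cstate (PiF (x, p, q, s)) = fst (snd (stepc (tape x p) q s))"
  by (simp add: PiF_def cstate_def split: prod.splits)

lemma Ef_state: "j < 3 \<Longrightarrow> cstate (Ef x j) = (if val j x = 0 then 9 + j else 12 + j)"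
proof -
  assume j: "j < 3"
  have t: "tape x (length x + 1) = RM" by (simp add: tape_def)
  have "cstate (Ef x j) = fst (snd (stepc RM (fst (enc j (val j x))) (snd (enc j (val j x)))))"
    unfolding Ef_def Dk_def cstate_PiF t by simp
  then show ?thesis using enc_RM[OF j, of "val j x"] by simp
qed

lemma Ef_inj: "i < 3 \<Longrightarrow> j < 3 \<Longrightarrow> Ef x i = Ef x j \<longleftrightarrow> i = j"
proof
  assume h: "i < 3" "j < 3" "Ef x i = Ef x j"
  then have "cstate (Ef x i) = cstate (Ef x j)" by simp
  then have "(if val i x = 0 then 9 + i else 12 + i) = (if val j x = 0 then 9 + j else (12::nat) + j)"
    using Ef_state[OF h(1)] Ef_state[OF h(2)] by simp
  then show "i = j" using h(1,2) by (auto split: if_splits)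
qed simp

lemma Uapp_last: "Uapp QA (psi QA x (Suc (length x))) = (\<lambda>c. \<Sum>j<(3::nat). if c = Ef x j then o3 else 0)"
proof
  fix c'
  have p: "psi QA x (Suc (length x)) = vec x (Suc (length x))" by (rule psi_vec) auto
  have "Uapp QA (vec x (Suc (length x))) c' = (\<Sum>j<3. o3 * amp QA c' (Dk x (Suc (length x)) j))"
    unfolding vec_def by (rule Uapp_vec)
  also have "\<dots> = (\<Sum>j<(3::nat). if c' = Ef x j then o3 else 0)"
  proof (rule sum.cong)
    fix j assume j: "j \<in> {..<(3::nat)}"
    have "amp QA c' (Dk x (Suc (length x)) j) = (if c' = PiF (Dk x (Suc (length x)) j) then 1 else 0)"
      using amp_nomix[OF valid_enc, of j] j unfolding Dk_def by auto
    then show "o3 * amp QA c' (Dk x (Suc (length x)) j) = (if c' = Ef x j then o3 else 0)"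
      by (simp add: Ef_def)
  qed simp
  finally show "Uapp QA (psi QA x (Suc (length x))) c' = (\<Sum>j<(3::nat). if c' = Ef x j then o3 else 0)"
    using p by simp
qed

lemma psi_after: "m \<ge> length x + 2 \<Longrightarrow> psi QA x m = (\<lambda>c. 0)"
proof (induct m)
  case 0 then show ?case by simp
next
  case (Suc m)
  show ?case
  proof (cases "m = Suc (length x)")
    case True
    show ?thesis
    proof
      fix c
      show "psi QA x (Suc m) c = 0"
      proof (cases "cstate c \<notin> acc QA \<union> rej QA")
        case True2: True
        have "\<forall>j\<in>{..<(3::nat)}. (if c = Ef x j then o3 else 0) = 0"
        proof
          fix j assume j: "j \<in> {..<(3::nat)}"
          have "cstate (Ef x j) \<in> acc QA \<union> rej QA" using Ef_state[of j x] j by (auto simp: QA_def)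
          then show "(if c = Ef x j then o3 else 0) = 0" using True2 by auto
        qed
        then have "(\<Sum>j<(3::nat). if c = Ef x j then o3 else 0) = 0" by (rule sum.neutral)
        then show ?thesis using True True2 Uapp_last[of x] by simp
      qed auto
    qed
  next
    case False
    then have "psi QA x m = (\<lambda>c. 0)" using Suc by auto
    then have u: "\<And>c. Uapp QA (psi QA x m) c = 0" using Uapp_zero by metis
    show ?thesis
      apply (simp only: psi.simps(2))
      apply (rule ext)
      apply (simp only: u)
      apply simp
      done
  qed
qed


lemma cmod_o3: "(cmod o3)\<^sup>2 = 1/3"
  by (simp add: o3_def)

lemma infsum_W:
  assumes inj: "\<And>i j. i < 3 \<Longrightarrow> j < 3 \<Longrightarrow> E i = E j \<Longrightarrow> i = j"
  shows "(\<Sum>\<^sub>\<infinity>c\<in>H. (cmod (\<Sum>j<(3::nat). if c = E j then o3 else 0))\<^sup>2) = (\<Sum>j<(3::nat). if E j \<in> H then 1/3 else 0)"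
proof -
  define W where "W c = (\<Sum>j<(3::nat). if c = E j then o3 else 0)" for c
  let ?J = "{j \<in> {..<(3::nat)}. E j \<in> H}"
  let ?T = "E ` ?J"
  have WE: "W (E j) = o3" if j: "j < 3" for j
  proof -
    have "W (E j) = (\<Sum>i<(3::nat). if i = j then o3 else 0)"
      unfolding W_def by (rule sum.cong) (use inj j in auto)
    also have "\<dots> = o3" using j by simp
    finally show ?thesis .
  qed
  have W0: "W c = 0" if "\<forall>j<3. c \<noteq> E j" for c
    unfolding W_def by (rule sum.neutral) (use that in auto)
  have "(\<Sum>\<^sub>\<infinity>c\<in>H. (cmod (W c))\<^sup>2) = (\<Sum>\<^sub>\<infinity>c\<in>?T. (cmod (W c))\<^sup>2)"
  proof (rule infsum_cong_neutral)
    fix c assume c: "c \<in> H - ?T"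
    then have "\<forall>j<3. c \<noteq> E j" by auto
    then show "(cmod (W c))\<^sup>2 = 0" using W0 by simp
  qed auto
  also have "\<dots> = (\<Sum>c\<in>?T. (cmod (W c))\<^sup>2)" by simp
  also have "\<dots> = (\<Sum>j\<in>?J. (cmod (W (E j)))\<^sup>2)"
    by (rule sum.reindex_cong[where l = E]) (use inj in \<open>auto simp: inj_on_def\<close>)
  also have "\<dots> = (\<Sum>j\<in>?J. 1/3)"
    by (rule sum.cong) (auto simp: WE cmod_o3)
  also have "\<dots> = (\<Sum>j<(3::nat). if E j \<in> H then 1/3 else 0)"
    by (rule sum.inter_filter) simp
  finally show ?thesis unfolding W_def .
qed

lemma suminf_single:
  assumes "\<And>n. n \<noteq> k \<Longrightarrow> f n = (0::real)"
  shows "(\<Sum>n. f n) = f k"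
proof -
  have "f = (\<lambda>n. if n = k then f n else 0)" using assms by auto
  then have "f sums f k" using sums_single[of k f] by metis
  then show ?thesis by (rule sums_unique[symmetric])
qed

lemma prob_gen:
  fixes x :: "letter list"
  assumes Hs: "\<forall>q\<in>Hs. 9 \<le> q"
  shows "(\<Sum>n. \<Sum>\<^sub>\<infinity>c\<in>{c. cstate c \<in> Hs}. (cmod (Uapp QA (psi QA x n) c))\<^sup>2)
     = (\<Sum>j<(3::nat). if cstate (Ef x j) \<in> Hs then 1/3 else 0)"
proof -
  define F where "F n = (\<Sum>\<^sub>\<infinity>c\<in>{c. cstate c \<in> Hs}. (cmod (Uapp QA (psi QA x n) c))\<^sup>2)" for n
  have z: "F n = 0" if n: "n \<noteq> Suc (length x)" for n
  proof (cases "n \<le> length x")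
    case True
    have u: "Uapp QA (psi QA x n) = vec x (Suc n)" using True by (rule Uapp_psi_le)
    show ?thesis unfolding F_def u
    proof (rule infsum_0)
      fix c :: "letter cfg" assume "c \<in> {c. cstate c \<in> Hs}"
      then have "\<not> (3 \<le> cstate c \<and> cstate c < 9)" using Hs by auto
      then have "vec x (Suc n) c = 0" using vec_nz by blast
      then show "(cmod (vec x (Suc n) c))\<^sup>2 = 0" by simp
    qed
  next
    case False
    then have "n \<ge> length x + 2" using n by auto
    then have "psi QA x n = (\<lambda>c. 0)" by (rule psi_after)
    then have u: "\<And>c. Uapp QA (psi QA x n) c = 0" using Uapp_zero by metis
    show ?thesis unfolding F_def u by simp
  qed
  have "(\<Sum>n. F n) = F (Suc (length x))" by (rule suminf_single) (use z in auto)
  also have "\<dots> = (\<Sum>j<(3::nat). if Ef x j \<in> {c. cstate c \<in> Hs} then 1/3 else 0)"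
    unfolding F_def Uapp_last by (rule infsum_W) (use Ef_inj in auto)
  finally show ?thesis unfolding F_def by simp
qed

lemma acc_QA: "acc_prob QA x = (\<Sum>j<(3::nat). if val j x = 0 then 1/3 else 0)"
proof -
  have "acc_prob QA x = (\<Sum>j<(3::nat). if cstate (Ef x j) \<in> acc QA then 1/3 else 0)"
    unfolding acc_prob_def by (rule prob_gen) (auto simp: QA_def)
  also have "\<dots> = (\<Sum>j<(3::nat). if val j x = 0 then 1/3 else 0)"
    by (rule sum.cong) (auto simp: Ef_state QA_def)
  finally show ?thesis .
qed

lemma rej_QA: "rej_prob QA x = (\<Sum>j<(3::nat). if val j x = 0 then 0 else 1/3)"
proof -
  have "rej_prob QA x = (\<Sum>j<(3::nat). if cstate (Ef x j) \<in> rej QA then 1/3 else 0)"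
    unfolding rej_prob_def by (rule prob_gen) (auto simp: QA_def)
  also have "\<dots> = (\<Sum>j<(3::nat). if val j x = 0 then 0 else 1/3)"
    by (rule sum.cong) (auto simp: Ef_state QA_def)
  finally show ?thesis .
qed

lemma val0: "val 0 w = int (count_list w La) - int (count_list w Lb)"
  by (induct w) (auto simp: val_def cop_def split: letter.splits)
lemma val1: "val 1 w = int (count_list w Lb) - int (count_list w Lc)"
  by (induct w) (auto simp: val_def cop_def split: letter.splits)
lemma val1': "val (Suc 0) w = int (count_list w Lb) - int (count_list w Lc)"
  using val1 by simp
lemma val2: "val 2 w = int (count_list w La) - int (count_list w Lc)"
  by (induct w) (auto simp: val_def cop_def split: letter.splits)

lemma sum3: "(\<Sum>j<(3::nat). f j) = f 0 + f 1 + (f 2 :: real)"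
  by (simp add: numeral_eq_Suc)

theorem theorem4:
  shows "\<exists>A :: letter qpa. is_QPA A \<and>
           (\<forall>x. x \<in> L3 \<longrightarrow> acc_prob A x \<ge> 2/3) \<and>
           (\<forall>x. x \<notin> L3 \<longrightarrow> rej_prob A x \<ge> 2/3)"
proof (intro exI[of _ QA] conjI allI impI)
  show "is_QPA QA" by (rule is_QPA_QA)
next
  fix x assume "x \<in> L3"
  then have "val 0 x = 0" "val 1 x = 0" "val 2 x = 0" by (auto simp: L3_def val0 val1 val1' val2)
  then show "acc_prob QA x \<ge> 2/3" by (simp add: acc_QA sum3)
next
  fix x assume "x \<notin> L3"
  then have h: "\<not> (val 0 x = 0 \<and> val 1 x = 0)" by (auto simp: L3_def val0 val1 val1')
  have e: "val 2 x = val 0 x + val 1 x" by (simp add: val0 val1 val1' val2)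
  show "rej_prob QA x \<ge> 2/3" unfolding rej_QA sum3 using h e by auto
qed

end
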